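(* Let $M\in\{0,1\}^{m\times n}$ be the vertex-edge incidence matrix of a simple graph, and let $c\in\mathbb Z^n$. Define $f_{c,M}\colon\mathbb Z^m\to\mathbb Z\cup\{\infty\}$ by \[ f_{c,M}(z)=\min\{c^\top x\mid Mx=z,\ x\in\mathbb Z^n_{\ge0}\}, \] with $f_{c,M}(z)=\infty$ if no such $x$ exists. Then $f_{c,M}$ is SBO jump M-convex.
   Context: $f_{c,M}(z)$ is the minimum cost of a perfect $z$-matching of the graph. For $x,y\in\mathbb Z^m$, write $x\sqsubseteq y$ if $|x_i|\le|y_i|$ and $x_iy_i\ge0$ for all $i$. A $2$-step decomposition of $d\in\mathbb Z^m$ is a multiset of vectors $p^{(1)},\dots,p^{(\ell)}\in\mathbb Z^m$ satisfying: - $\|p^{(k)}\|_1=2$ and $p^{(k)}\sqsubseteq d$ for every $k$; - $d=\sum_k p^{(k)}$. A function $f\colon\mathbb Z^m\to\mathbb Q\cup\{\infty\}$ is SBO jump M-convex if the following holds for every two points $z^{(1)},z^{(2)}$ with $f(z^{(1)}),f(z^{(2)})<\infty$. There must exist a $2$-step decomposition $p^{(1)},\dots,p^{(\ell)}$ of $z^{(2)}-z^{(1)}$ and reals $g^{(1)},\dots,g^{(\ell)}$ such that: - $f(z^{(2)})=f(z^{(1)})+\sum_{k\in[\ell]}g^{(k)}$; - for every $I\subseteq[\ell]$, $f\bigl(z^{(1)}+\sum_{k\in I}p^{(k)}\bigr)\le f(z^{(1)})+\sum_{k\in I}g^{(k)}$. *)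

theory Defs
  imports "HOL-Analysis.Analysis"
begin

text \<open>Vectors in Z^m are represented as functions nat => int vanishing outside {0..<m}.\<close>
definition zvec :: "nat \<Rightarrow> (nat \<Rightarrow> int) set" where
  "zvec m = {z. \<forall>i\<ge>m. z i = 0}"

definition conf_le :: "(nat \<Rightarrow> int) \<Rightarrow> (nat \<Rightarrow> int) \<Rightarrow> bool" where
  "conf_le x y \<longleftrightarrow> (\<forall>i. \<bar>x i\<bar> \<le> \<bar>y i\<bar> \<and> x i * y i \<ge> 0)"

definition l1norm :: "nat \<Rightarrow> (nat \<Rightarrow> int) \<Rightarrow> int" where
  "l1norm m p = (\<Sum>i<m. \<bar>p i\<bar>)"

definition two_step_decomp :: "nat \<Rightarrow> (nat \<Rightarrow> int) \<Rightarrow> (nat \<Rightarrow> int) list \<Rightarrow> bool" where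
  "two_step_decomp m d ps \<longleftrightarrow>
     (\<forall>p\<in>set ps. p \<in> zvec m \<and> l1norm m p = 2 \<and> conf_le p d) \<and>
     (\<forall>i. d i = (\<Sum>k<length ps. (ps ! k) i))"

definition sbo_jump_mconvex :: "nat \<Rightarrow> ((nat \<Rightarrow> int) \<Rightarrow> ereal) \<Rightarrow> bool" where
  "sbo_jump_mconvex m f \<longleftrightarrow>
     (\<forall>z1\<in>zvec m. \<forall>z2\<in>zvec m. f z1 < \<infinity> \<longrightarrow> f z2 < \<infinity> \<longrightarrow>
        (\<exists>ps gs. two_step_decomp m (\<lambda>i. z2 i - z1 i) ps \<and> length gs = length ps \<and>
           f z2 = f z1 + ereal (\<Sum>k<length ps. gs ! k) \<and>
           (\<forall>I\<subseteq>{..<length ps}.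
              f (\<lambda>i. z1 i + (\<Sum>k\<in>I. (ps ! k) i)) \<le> f z1 + ereal (\<Sum>k\<in>I. gs ! k))))"

text \<open>M (rows 0..<m = vertices, columns 0..<n = edges) is the vertex-edge incidence
  matrix of a simple graph: 0/1 entries, every column has exactly two ones (no loops),
  and columns are pairwise distinct (no parallel edges).\<close>
definition simple_graph_incidence :: "nat \<Rightarrow> nat \<Rightarrow> (nat \<Rightarrow> nat \<Rightarrow> int) \<Rightarrow> bool" where
  "simple_graph_incidence m n M \<longleftrightarrow>
     (\<forall>i<m. \<forall>j<n. M i j = 0 \<or> M i j = 1) \<and>
     (\<forall>j<n. card {i. i < m \<and> M i j = 1} = 2) \<and>
     (\<forall>j<n. \<forall>j'<n. j \<noteq> j' \<longrightarrow> (\<exists>i<m. M i j \<noteq> M i j'))"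

definition feasible :: "nat \<Rightarrow> nat \<Rightarrow> (nat \<Rightarrow> nat \<Rightarrow> int) \<Rightarrow> (nat \<Rightarrow> int) \<Rightarrow> (nat \<Rightarrow> int) set" where
  "feasible m n M z = {x. (\<forall>j<n. x j \<ge> 0) \<and> (\<forall>j\<ge>n. x j = 0) \<and>
                          (\<forall>i<m. (\<Sum>j<n. M i j * x j) = z i)}"

definition fcM :: "nat \<Rightarrow> nat \<Rightarrow> (nat \<Rightarrow> int) \<Rightarrow> (nat \<Rightarrow> nat \<Rightarrow> int) \<Rightarrow> (nat \<Rightarrow> int) \<Rightarrow> ereal" where
  "fcM m n c M z =
     (let S = (\<lambda>x. \<Sum>j<n. c j * x j) ` feasible m n M z in
      if S = {} then \<infinity> else ereal (real_of_int (Min S)))"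

end

theory Submission
  imports Defs
begin


definition cons_vec :: "(nat \<Rightarrow> int) \<Rightarrow> (nat \<Rightarrow> int) \<Rightarrow> bool" where
  "cons_vec p q \<longleftrightarrow> (\<forall>i. 0 \<le> p i * q i)"

lemma l1_parity: "even (l1norm m p) \<longleftrightarrow> even (\<Sum>i<m. p i)"
proof -
  have "l1norm m p - (\<Sum>i<m. p i) = (\<Sum>i<m. \<bar>p i\<bar> - p i)"
    by (simp add: l1norm_def sum_subtractf)
  moreover have "even (\<Sum>i<m. \<bar>p i\<bar> - p i)"
    by (rule dvd_sum) (auto simp: abs_if)
  ultimately have "even (l1norm m p - (\<Sum>i<m. p i))" by simp
  then show ?thesis by (metis add_diff_cancel_left' diff_add_cancel even_add)
qed

lemma merge_l1:
  assumes "s i * r i < 0" "i < m"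
  shows "l1norm m (\<lambda>k. s k + r k) \<le> l1norm m s + l1norm m r - 2"
proof -
  have "l1norm m (\<lambda>k. s k + r k) \<le> (\<Sum>k<m. \<bar>s k\<bar> + \<bar>r k\<bar> - (if k = i then 2 else 0))"
    unfolding l1norm_def
  proof (rule sum_mono)
    fix k assume "k \<in> {..<m}"
    show "\<bar>s k + r k\<bar> \<le> \<bar>s k\<bar> + \<bar>r k\<bar> - (if k = i then 2 else 0)"
    proof (cases "k = i")
      case True
      then show ?thesis using assms(1)
        by (auto simp: abs_if mult_less_0_iff)
    qed simp
  qed
  also have "\<dots> = l1norm m s + l1norm m r - 2"
    using assms(2) by (simp add: l1norm_def sum_subtractf sum.distrib)
  finally show ?thesis .
qed

lemma l1_zero:
  assumes "p \<in> zvec m" "l1norm m p = 0"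
  shows "p = (\<lambda>_. 0)"
proof
  fix i show "p i = 0"
  proof (cases "i < m")
    case True
    have "\<bar>p i\<bar> \<le> l1norm m p" unfolding l1norm_def
      by (rule member_le_sum) (use True in auto)
    then show ?thesis using assms by simp
  next
    case False then show ?thesis using assms by (simp add: zvec_def)
  qed
qed

lemma l1_nonneg: "0 \<le> l1norm m p"
  by (simp add: l1norm_def sum_nonneg)

lemma zvec_add: "a \<in> zvec m \<Longrightarrow> b \<in> zvec m \<Longrightarrow> (\<lambda>k. a k + b k) \<in> zvec m"
  by (simp add: zvec_def)

lemma ins:
  fixes Q :: "((nat \<Rightarrow> int) \<times> (nat \<Rightarrow> int)) \<Rightarrow> bool"
    and rs :: "((nat \<Rightarrow> int) \<times> (nat \<Rightarrow> int)) list"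
  assumes clos: "\<And>a b. Q a \<Longrightarrow> Q b \<Longrightarrow> Q (\<lambda>k. fst a k + fst b k, \<lambda>k. snd a k + snd b k)"
  shows "(\<forall>r\<in>set rs. Q r \<and> fst r \<in> zvec m \<and> l1norm m (fst r) = 2) \<Longrightarrow>
    (\<forall>r\<in>set rs. \<forall>r'\<in>set rs. cons_vec (fst r) (fst r')) \<Longrightarrow>
    Q s \<Longrightarrow> fst s \<in> zvec m \<Longrightarrow> l1norm m (fst s) = 0 \<or> l1norm m (fst s) = 2 \<Longrightarrow>
    \<exists>rs' zs. (\<forall>r\<in>set rs'. Q r \<and> fst r \<in> zvec m \<and> l1norm m (fst r) = 2) \<and>
      (\<forall>r\<in>set rs'. \<forall>r'\<in>set rs'. cons_vec (fst r) (fst r')) \<and>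
      (\<forall>z\<in>set zs. Q z \<and> fst z = (\<lambda>_. 0)) \<and>
      (\<forall>i. (\<Sum>r\<leftarrow>rs'. fst r i) + (\<Sum>z\<leftarrow>zs. fst z i) = (\<Sum>r\<leftarrow>rs. fst r i) + fst s i) \<and>
      (\<forall>i. (\<Sum>r\<leftarrow>rs'. snd r i) + (\<Sum>z\<leftarrow>zs. snd z i) = (\<Sum>r\<leftarrow>rs. snd r i) + snd s i)"
proof (induction "length rs" arbitrary: rs s rule: less_induct)
  case less
  show ?case
  proof (cases "l1norm m (fst s) = 0")
    case True
    then have "fst s = (\<lambda>_. 0)" using l1_zero less.prems by blast
    show ?thesis
      apply (rule exI[of _ rs], rule exI[of _ "[s]"])
      using True less.prems l1_zero by auto
  next
    case False
    with less.prems have s2: "l1norm m (fst s) = 2" by auto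
    show ?thesis
    proof (cases "\<forall>r\<in>set rs. cons_vec (fst s) (fst r)")
      case True
      show ?thesis
        apply (rule exI[of _ "s # rs"], rule exI[of _ "[] :: ((nat \<Rightarrow> int) \<times> (nat \<Rightarrow> int)) list"])
        using True less.prems s2 by (auto simp: cons_vec_def mult.commute)
    next
      case False
      then obtain r i where r: "r \<in> set rs" and ri: "fst s i * fst r i < 0"
        by (auto simp: cons_vec_def not_le)
      have im: "i < m"
      proof (rule ccontr)
        assume "\<not> i < m"
        then have "fst s i = 0" using less.prems(4) by (simp add: zvec_def)
        then show False using ri by simp
      qed
      obtain xs ys where rs: "rs = xs @ r # ys" using split_list[OF r] by blast
      define s' where "s' = (\<lambda>k. fst s k + fst r k, \<lambda>k. snd s k + snd r k)"
      have Qs': "Q s'" unfolding s'_def by (rule clos) (use less.prems r in auto)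
      have r2: "l1norm m (fst r) = 2" "fst r \<in> zvec m" using less.prems(1) r by auto
      have zs': "fst s' \<in> zvec m" unfolding s'_def using zvec_add[OF less.prems(4) r2(2)] by simp
      have le: "l1norm m (fst s') \<le> 2" unfolding s'_def using merge_l1[of "fst s" i "fst r", OF ri im] s2 r2 by simp
      have ev: "even (l1norm m (fst s'))"
      proof -
        have "even (\<Sum>i<m. fst s i)" "even (\<Sum>i<m. fst r i)"
          using l1_parity[of m "fst s"] l1_parity[of m "fst r"] s2 r2 by auto
        then have "even (\<Sum>i<m. fst s' i)" by (simp add: s'_def sum.distrib)
        then show ?thesis using l1_parity by blast
      qed
      have "l1norm m (fst s') = 0 \<or> l1norm m (fst s') = 2"
        using le ev l1_nonneg[of m "fst s'"]
        by (smt (verit, ccfv_SIG) evenE)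
      moreover have "length (xs @ ys) < length rs" using rs by simp
      moreover have "\<forall>r\<in>set (xs@ys). Q r \<and> fst r \<in> zvec m \<and> l1norm m (fst r) = 2"
        using less.prems(1) rs by auto
      moreover have "\<forall>r\<in>set (xs@ys). \<forall>r'\<in>set (xs@ys). cons_vec (fst r) (fst r')"
        using less.prems(2) rs by auto
      ultimately obtain rs' zs where
        A: "(\<forall>r\<in>set rs'. Q r \<and> fst r \<in> zvec m \<and> l1norm m (fst r) = 2) \<and>
      (\<forall>r\<in>set rs'. \<forall>r'\<in>set rs'. cons_vec (fst r) (fst r')) \<and>
      (\<forall>z\<in>set zs. Q z \<and> fst z = (\<lambda>_. 0)) \<and>
      (\<forall>i. (\<Sum>r\<leftarrow>rs'. fst r i) + (\<Sum>z\<leftarrow>zs. fst z i) = (\<Sum>r\<leftarrow>xs@ys. fst r i) + fst s' i) \<and>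
      (\<forall>i. (\<Sum>r\<leftarrow>rs'. snd r i) + (\<Sum>z\<leftarrow>zs. snd z i) = (\<Sum>r\<leftarrow>xs@ys. snd r i) + snd s' i)"
        using less.hyps[of "xs @ ys" s'] Qs' zs' by blast
      show ?thesis
        apply (rule exI[of _ rs'], rule exI[of _ zs])
        using A rs by (simp add: s'_def algebra_simps)
    qed
  qed
qed




lemma fold_ins:
  fixes Q :: "((nat \<Rightarrow> int) \<times> (nat \<Rightarrow> int)) \<Rightarrow> bool"
    and L :: "((nat \<Rightarrow> int) \<times> (nat \<Rightarrow> int)) list"
  assumes clos: "\<And>a b. Q a \<Longrightarrow> Q b \<Longrightarrow> Q (\<lambda>k. fst a k + fst b k, \<lambda>k. snd a k + snd b k)"
  shows "(\<forall>s\<in>set L. Q s \<and> fst s \<in> zvec m \<and> l1norm m (fst s) = 2) \<Longrightarrow>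
    \<exists>rs zs. (\<forall>r\<in>set rs. Q r \<and> fst r \<in> zvec m \<and> l1norm m (fst r) = 2) \<and>
      (\<forall>r\<in>set rs. \<forall>r'\<in>set rs. cons_vec (fst r) (fst r')) \<and>
      (\<forall>z\<in>set zs. Q z \<and> fst z = (\<lambda>_. 0)) \<and>
      (\<forall>i. (\<Sum>r\<leftarrow>rs. fst r i) + (\<Sum>z\<leftarrow>zs. fst z i) = (\<Sum>r\<leftarrow>L. fst r i)) \<and>
      (\<forall>i. (\<Sum>r\<leftarrow>rs. snd r i) + (\<Sum>z\<leftarrow>zs. snd z i) = (\<Sum>r\<leftarrow>L. snd r i))"
proof (induction L)
  case Nil
  show ?case
    apply (rule exI[of _ "[]"], rule exI[of _ "[]"]) by simp
next
  case (Cons s L)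
  then obtain rs0 zs0 where A: "(\<forall>r\<in>set rs0. Q r \<and> fst r \<in> zvec m \<and> l1norm m (fst r) = 2) \<and>
      (\<forall>r\<in>set rs0. \<forall>r'\<in>set rs0. cons_vec (fst r) (fst r')) \<and>
      (\<forall>z\<in>set zs0. Q z \<and> fst z = (\<lambda>_. 0)) \<and>
      (\<forall>i. (\<Sum>r\<leftarrow>rs0. fst r i) + (\<Sum>z\<leftarrow>zs0. fst z i) = (\<Sum>r\<leftarrow>L. fst r i)) \<and>
      (\<forall>i. (\<Sum>r\<leftarrow>rs0. snd r i) + (\<Sum>z\<leftarrow>zs0. snd z i) = (\<Sum>r\<leftarrow>L. snd r i))"
    by auto
  have "Q s" "fst s \<in> zvec m" "l1norm m (fst s) = 2" using Cons.prems by auto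
  then obtain rs zs where B: "(\<forall>r\<in>set rs. Q r \<and> fst r \<in> zvec m \<and> l1norm m (fst r) = 2) \<and>
      (\<forall>r\<in>set rs. \<forall>r'\<in>set rs. cons_vec (fst r) (fst r')) \<and>
      (\<forall>z\<in>set zs. Q z \<and> fst z = (\<lambda>_. 0)) \<and>
      (\<forall>i. (\<Sum>r\<leftarrow>rs. fst r i) + (\<Sum>z\<leftarrow>zs. fst z i) = (\<Sum>r\<leftarrow>rs0. fst r i) + fst s i) \<and>
      (\<forall>i. (\<Sum>r\<leftarrow>rs. snd r i) + (\<Sum>z\<leftarrow>zs. snd z i) = (\<Sum>r\<leftarrow>rs0. snd r i) + snd s i)"
    using ins[of Q rs0 m s, OF clos] A by blast
  show ?case
    apply (rule exI[of _ rs], rule exI[of _ "zs @ zs0"])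
  proof (intro conjI allI)
    fix i
    have "(\<Sum>r\<leftarrow>rs. fst r i) + (\<Sum>z\<leftarrow>zs. fst z i) = (\<Sum>r\<leftarrow>rs0. fst r i) + fst s i"
      "(\<Sum>r\<leftarrow>rs0. fst r i) + (\<Sum>z\<leftarrow>zs0. fst z i) = (\<Sum>r\<leftarrow>L. fst r i)"
      using A B by blast+
    then show "(\<Sum>r\<leftarrow>rs. fst r i) + (\<Sum>z\<leftarrow>zs @ zs0. fst z i) = (\<Sum>r\<leftarrow>s # L. fst r i)"
      by simp
    have "(\<Sum>r\<leftarrow>rs. snd r i) + (\<Sum>z\<leftarrow>zs. snd z i) = (\<Sum>r\<leftarrow>rs0. snd r i) + snd s i"
      "(\<Sum>r\<leftarrow>rs0. snd r i) + (\<Sum>z\<leftarrow>zs0. snd z i) = (\<Sum>r\<leftarrow>L. snd r i)"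
      using A B by blast+
    then show "(\<Sum>r\<leftarrow>rs. snd r i) + (\<Sum>z\<leftarrow>zs @ zs0. snd z i) = (\<Sum>r\<leftarrow>s # L. snd r i)"
      by simp
  qed (use A B in auto)
qed




lemma fin_feas:
  assumes G: "simple_graph_incidence m n M"
  shows "finite (feasible m n M z)"
proof -
  define B where "B = (\<Sum>i<m. \<bar>z i\<bar>)"
  have bnd: "x j \<le> B" if x: "x \<in> feasible m n M z" and j: "j < n" for x j
  proof -
    have "card {i. i < m \<and> M i j = 1} = 2" using G j by (simp add: simple_graph_incidence_def)
    then have "{i. i < m \<and> M i j = 1} \<noteq> {}" by (metis card.empty zero_neq_numeral)
    then obtain i where i: "i < m" "M i j = 1" by blast
    have nn: "\<forall>j'\<in>{..<n}. 0 \<le> M i j' * x j'"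
    proof
      fix j' assume "j' \<in> {..<n}"
      then have "0 \<le> M i j'" "0 \<le> x j'" using G x i(1)
        by (auto simp: simple_graph_incidence_def feasible_def) (metis order_refl zero_le_one)
      then show "0 \<le> M i j' * x j'" by simp
    qed
    have "x j = M i j * x j" using i by simp
    also have "\<dots> \<le> (\<Sum>j'<n. M i j' * x j')"
      by (rule member_le_sum) (use nn j in auto)
    also have "\<dots> = z i" using x i by (simp add: feasible_def)
    also have "\<dots> \<le> \<bar>z i\<bar>" by simp
    also have "\<dots> \<le> B" unfolding B_def by (rule member_le_sum) (use i in auto)
    finally show ?thesis .
  qed
  have "feasible m n M z \<subseteq> (\<lambda>f j. if j < n then f j else 0) ` (PiE {..<n} (\<lambda>_. {0..B}))"
  proof
    fix x assume x: "x \<in> feasible m n M z"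
    have "x = (\<lambda>j. if j < n then restrict x {..<n} j else 0)"
      using x by (auto simp: feasible_def)
    moreover have "restrict x {..<n} \<in> PiE {..<n} (\<lambda>_. {0..B})"
      using x bnd by (auto simp: feasible_def)
    ultimately show "x \<in> (\<lambda>f j. if j < n then f j else 0) ` (PiE {..<n} (\<lambda>_. {0..B}))"
      by blast
  qed
  then show ?thesis by (rule finite_subset) (intro finite_imageI finite_PiE; simp)
qed

lemma fcM_le:
  assumes G: "simple_graph_incidence m n M" and x: "x \<in> feasible m n M z"
  shows "fcM m n c M z \<le> ereal (real_of_int (\<Sum>j<n. c j * x j))"
proof -
  let ?S = "(\<lambda>x. \<Sum>j<n. c j * x j) ` feasible m n M z"
  have ne: "?S \<noteq> {}" using x by blast
  have eq: "fcM m n c M z = ereal (real_of_int (Min ?S))"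
    unfolding fcM_def Let_def by (rule if_not_P[OF ne])
  have "Min ?S \<le> (\<Sum>j<n. c j * x j)"
    by (rule Min_le) (use fin_feas[OF G] x in auto)
  then have "real_of_int (Min ?S) \<le> real_of_int (\<Sum>j<n. c j * x j)"
    by (simp only: of_int_le_iff)
  then show ?thesis using eq by (metis ereal_less_eq(3))
qed

lemma fcM_attain:
  assumes G: "simple_graph_incidence m n M" and f: "fcM m n c M z < \<infinity>"
  shows "\<exists>x\<in>feasible m n M z. fcM m n c M z = ereal (real_of_int (\<Sum>j<n. c j * x j))"
proof -
  let ?S = "(\<lambda>x. \<Sum>j<n. c j * x j) ` feasible m n M z"
  have ne: "?S \<noteq> {}" using f by (auto simp: fcM_def Let_def)
  have "Min ?S \<in> ?S" by (rule Min_in) (use fin_feas[OF G] ne in auto)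
  then obtain x where "x \<in> feasible m n M z" "Min ?S = (\<Sum>j<n. c j * x j)" by auto
  moreover have "fcM m n c M z = ereal (real_of_int (Min ?S))"
    unfolding fcM_def Let_def by (rule if_not_P[OF ne])
  ultimately show ?thesis by metis
qed

definition stp :: "nat \<Rightarrow> (nat \<Rightarrow> nat \<Rightarrow> int) \<Rightarrow> (nat \<Rightarrow> int) \<Rightarrow> nat \<Rightarrow> (nat \<Rightarrow> int) \<times> (nat \<Rightarrow> int)" where
  "stp m M u j = ((\<lambda>i. if i < m then sgn (u j) * M i j else 0), (\<lambda>k. if k = j then sgn (u j) else 0))"

fun steps :: "nat \<Rightarrow> (nat \<Rightarrow> nat \<Rightarrow> int) \<Rightarrow> (nat \<Rightarrow> int) \<Rightarrow> nat \<Rightarrow> ((nat \<Rightarrow> int) \<times> (nat \<Rightarrow> int)) list" where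
  "steps m M u 0 = []"
| "steps m M u (Suc j) = steps m M u j @ replicate (nat \<bar>u j\<bar>) (stp m M u j)"

lemma steps_set: "s \<in> set (steps m M u n) \<Longrightarrow> \<exists>j<n. s = stp m M u j \<and> u j \<noteq> 0"
  by (induction n) (auto simp: less_Suc_eq)

lemma steps_snd: "(\<Sum>r\<leftarrow>steps m M u n. snd r k) = (if k < n then u k else 0)"
proof (induction n)
  case (Suc n)
  have "of_nat (nat \<bar>u n\<bar>) * sgn (u n) = u n" by (simp add: abs_mult_sgn)
  then show ?case using Suc by (auto simp: stp_def map_replicate_const sum_list_replicate less_Suc_eq)
qed simp

lemma steps_fst: "(\<Sum>r\<leftarrow>steps m M u n. fst r i) = (if i < m then (\<Sum>j<n. M i j * u j) else 0)"
proof (induction n)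
  case (Suc n)
  have "of_nat (nat \<bar>u n\<bar>) * (sgn (u n) * M i n) = (\<bar>u n\<bar> * sgn (u n)) * M i n"
    by simp
  also have "\<dots> = M i n * u n" by (simp add: abs_mult_sgn)
  finally have "of_nat (nat \<bar>u n\<bar>) * (sgn (u n) * M i n) = M i n * u n" .
  then show ?case using Suc by (auto simp: stp_def map_replicate_const sum_list_replicate)
qed simp

lemma stp_l1:
  assumes G: "simple_graph_incidence m n M" and j: "j < n" and u: "u j \<noteq> 0"
  shows "l1norm m (fst (stp m M u j)) = 2"
proof -
  have "l1norm m (fst (stp m M u j)) = (\<Sum>i<m. \<bar>M i j\<bar>)"
    unfolding l1norm_def
  proof (rule sum.cong)
    fix i assume "i \<in> {..<m}"
    then show "\<bar>fst (stp m M u j) i\<bar> = \<bar>M i j\<bar>"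
      using u by (simp add: stp_def abs_mult sgn_if)
  qed simp
  also have "\<dots> = (\<Sum>i<m. if M i j = 1 then 1 else 0)"
    by (rule sum.cong) (use G j in \<open>auto simp: simple_graph_incidence_def\<close>)
  also have "{..<m} \<inter> {i. M i j = 1} = {i. i < m \<and> M i j = 1}" by auto
  then have "(\<Sum>i<m. if M i j = 1 then 1 else 0) = (of_nat (card {i. i < m \<and> M i j = 1}) :: int)"
    by (simp add: sum.If_cases)
  finally show ?thesis using G j by (simp add: simple_graph_incidence_def)
qed

lemma sum_list_idx: "(\<Sum>x\<leftarrow>xs. f x) = (\<Sum>k<length xs. f (xs ! k))"
  by (induction xs rule: rev_induct) (auto simp: nth_append)

lemma cons_sum:
  fixes xs :: "int list"
  assumes "\<forall>a\<in>set xs. \<forall>b\<in>set xs. 0 \<le> a * b" "x \<in> set xs"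
  shows "\<bar>x\<bar> \<le> \<bar>sum_list xs\<bar> \<and> 0 \<le> x * sum_list xs"
proof (cases "x > 0")
  case True
  then have "\<forall>b\<in>set xs. 0 \<le> b" using assms by (metis zero_le_mult_iff not_less)
  then have "x \<le> sum_list xs" using assms(2) by (simp add: member_le_sum_list)
  then show ?thesis using True by simp
next
  case False
  show ?thesis
  proof (cases "x < 0")
    case True
    then have "\<forall>b\<in>set xs. b \<le> 0" using assms by (metis zero_le_mult_iff not_less)
    obtain as bs where xs: "xs = as @ x # bs" using split_list[OF assms(2)] by blast
    have "sum_list as \<le> 0" "sum_list bs \<le> 0"
      using \<open>\<forall>b\<in>set xs. b \<le> 0\<close> xs by (auto intro!: sum_list_nonpos)
    then have "sum_list xs \<le> x" using xs by simp
    then show ?thesis using True by (simp add: mult_nonpos_nonpos)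
  next
    case False
    then show ?thesis using \<open>\<not> x > 0\<close> by simp
  qed
qed




lemma sum_zero_fst: "\<forall>z\<in>set zs. fst z = (\<lambda>_. (0::int)) \<Longrightarrow> (\<Sum>z\<leftarrow>zs. fst z k) = 0"
  by (induction zs) auto

theorem proposition17:
  fixes m n :: nat and M :: "nat \<Rightarrow> nat \<Rightarrow> int" and c :: "nat \<Rightarrow> int"
  assumes "simple_graph_incidence m n M"
  shows "sbo_jump_mconvex m (\<lambda>z. fcM m n c M z)"
  unfolding sbo_jump_mconvex_def
proof (intro ballI impI)
  note G = assms
  fix z1 z2 assume z1: "z1 \<in> zvec m" and z2: "z2 \<in> zvec m"
    and f1: "fcM m n c M z1 < \<infinity>" and f2: "fcM m n c M z2 < \<infinity>"
  obtain x1 where x1: "x1 \<in> feasible m n M z1"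
    and fx1: "fcM m n c M z1 = ereal (real_of_int (\<Sum>j<n. c j * x1 j))"
    using fcM_attain[OF G f1] by blast
  obtain x2 where x2: "x2 \<in> feasible m n M z2"
    and fx2: "fcM m n c M z2 = ereal (real_of_int (\<Sum>j<n. c j * x2 j))"
    using fcM_attain[OF G f2] by blast
  define u where "u = (\<lambda>j. x2 j - x1 j)"
  define Q where "Q = (\<lambda>r::(nat \<Rightarrow> int) \<times> (nat \<Rightarrow> int).
     (\<forall>i<m. (\<Sum>j<n. M i j * snd r j) = fst r i) \<and>
     (\<forall>j. (0 \<le> u j \<longrightarrow> 0 \<le> snd r j) \<and> (u j \<le> 0 \<longrightarrow> snd r j \<le> 0)) \<and>
     (\<forall>j\<ge>n. snd r j = 0))"
  have clos: "\<And>a b. Q a \<Longrightarrow> Q b \<Longrightarrow> Q (\<lambda>k. fst a k + fst b k, \<lambda>k. snd a k + snd b k)"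
    unfolding Q_def by (auto simp: sum.distrib distrib_left) (metis add_nonpos_nonpos)+
  have Q0: "Q (\<lambda>_. 0, \<lambda>_. 0)" unfolding Q_def by simp
  have Qlist: "\<forall>z\<in>set zs. Q z \<Longrightarrow> Q (\<lambda>k. \<Sum>z\<leftarrow>zs. fst z k, \<lambda>k. \<Sum>z\<leftarrow>zs. snd z k)" for zs
  proof (induction zs)
    case Nil then show ?case using Q0 by simp
  next
    case (Cons z zs)
    then show ?case using clos[of z "(\<lambda>k. \<Sum>z\<leftarrow>zs. fst z k, \<lambda>k. \<Sum>z\<leftarrow>zs. snd z k)"] by simp
  qed
  define L where "L = steps m M u n"
  have L: "\<forall>s\<in>set L. Q s \<and> fst s \<in> zvec m \<and> l1norm m (fst s) = 2"
  proof
    fix s assume "s \<in> set L"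
    then obtain j where j: "j < n" "s = stp m M u j" "u j \<noteq> 0"
      using steps_set unfolding L_def by blast
    have sn: "snd s = (\<lambda>k. if k = j then sgn (u j) else 0)" using j(2) by (simp add: stp_def)
    have fs: "fst s i = sgn (u j) * M i j" if "i < m" for i using j(2) that by (simp add: stp_def)
    have e1: "(\<Sum>j'<n. M i j' * snd s j') = sgn (u j) * M i j" for i
    proof -
      have "(\<Sum>j'<n. M i j' * snd s j') = (\<Sum>j'<n. if j' = j then M i j * sgn (u j) else 0)"
        by (rule sum.cong) (simp_all add: sn)
      also have "\<dots> = M i j * sgn (u j)" using j(1) by simp
      finally show ?thesis by simp
    qed
    have sg1: "0 \<le> u j \<Longrightarrow> 0 \<le> sgn (u j)" by (simp add: sgn_if)
    have sg2: "u j \<le> 0 \<Longrightarrow> sgn (u j) \<le> 0" by (simp add: sgn_if)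
    have "Q s" unfolding Q_def
    proof (intro conjI allI impI)
      fix i assume "i < m"
      then show "(\<Sum>j'<n. M i j' * snd s j') = fst s i" using e1[of i] fs[of i] by simp
    next
      fix k assume uk: "0 \<le> u k"
      show "0 \<le> snd s k"
      proof (cases "k = j")
        case True
        then have "snd s k = sgn (u j)" "0 \<le> u j" using sn uk by auto
        then show ?thesis using sg1 by metis
      next
        case False
        then have "snd s k = 0" using sn by auto
        then show ?thesis by (metis order_refl)
      qed
    next
      fix k assume uk: "u k \<le> 0"
      show "snd s k \<le> 0"
      proof (cases "k = j")
        case True
        then have "snd s k = sgn (u j)" "u j \<le> 0" using sn uk by auto
        then show ?thesis using sg2 by metis
      next
        case False
        then have "snd s k = 0" using sn by auto
        then show ?thesis by (metis order_refl)
      qed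
    next
      fix k assume "n \<le> k" then show "snd s k = 0" using j(1) by (simp add: sn)
    qed
    moreover have "fst s \<in> zvec m" using j by (simp add: stp_def zvec_def)
    ultimately show "Q s \<and> fst s \<in> zvec m \<and> l1norm m (fst s) = 2"
      using stp_l1[of m n M j u, OF G j(1) j(3)] j by simp
  qed
  have ex: "\<exists>rs zs. (\<forall>r\<in>set rs. Q r \<and> fst r \<in> zvec m \<and> l1norm m (fst r) = 2) \<and>
      (\<forall>r\<in>set rs. \<forall>r'\<in>set rs. cons_vec (fst r) (fst r')) \<and>
      (\<forall>z\<in>set zs. Q z \<and> fst z = (\<lambda>_. 0)) \<and>
      (\<forall>i. (\<Sum>r\<leftarrow>rs. fst r i) + (\<Sum>z\<leftarrow>zs. fst z i) = (\<Sum>r\<leftarrow>L. fst r i)) \<and>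
      (\<forall>i. (\<Sum>r\<leftarrow>rs. snd r i) + (\<Sum>z\<leftarrow>zs. snd z i) = (\<Sum>r\<leftarrow>L. snd r i))"
    by (rule fold_ins[of Q L m, OF clos L])
  then obtain rs zs where RS0: "(\<forall>r\<in>set rs. Q r \<and> fst r \<in> zvec m \<and> l1norm m (fst r) = 2) \<and>
      (\<forall>r\<in>set rs. \<forall>r'\<in>set rs. cons_vec (fst r) (fst r')) \<and>
      (\<forall>z\<in>set zs. Q z \<and> fst z = (\<lambda>_. 0)) \<and>
      (\<forall>i. (\<Sum>r\<leftarrow>rs. fst r i) + (\<Sum>z\<leftarrow>zs. fst z i) = (\<Sum>r\<leftarrow>L. fst r i)) \<and>
      (\<forall>i. (\<Sum>r\<leftarrow>rs. snd r i) + (\<Sum>z\<leftarrow>zs. snd z i) = (\<Sum>r\<leftarrow>L. snd r i))"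
    by (elim exE) (erule that)
  note RS = conjunct1[OF RS0] conjunct1[OF conjunct2[OF RS0]]
    conjunct1[OF conjunct2[OF conjunct2[OF RS0]]]
    conjunct1[OF conjunct2[OF conjunct2[OF conjunct2[OF RS0]]]]
    conjunct2[OF conjunct2[OF conjunct2[OF conjunct2[OF RS0]]]]
  have zsf: "\<forall>z\<in>set zs. fst z = (\<lambda>_. 0)" using RS(3) by simp
  have zs0: "(\<Sum>z\<leftarrow>zs. fst z k) = 0" for k by (rule sum_zero_fst[OF zsf])
  have ugeq: "u j = 0" if "j \<ge> n" for j using x1 x2 that by (simp add: u_def feasible_def)
  have sndL: "(\<Sum>r\<leftarrow>L. snd r k) = u k" for k
    unfolding L_def steps_snd using ugeq by simp
  define d where "d = (\<lambda>i. z2 i - z1 i)"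
  have dM: "d i = (\<Sum>r\<leftarrow>L. fst r i)" for i
  proof (cases "i < m")
    case True
    then have "d i = (\<Sum>j<n. M i j * x2 j) - (\<Sum>j<n. M i j * x1 j)"
      using x1 x2 by (simp add: d_def feasible_def)
    also have "\<dots> = (\<Sum>j<n. M i j * u j)"
      by (simp add: u_def sum_subtractf right_diff_distrib)
    finally show ?thesis using True unfolding L_def steps_fst by simp
  next
    case False
    then show ?thesis using z1 z2 unfolding L_def steps_fst by (simp add: d_def zvec_def)
  qed
  define W where "W = (\<lambda>k. \<Sum>z\<leftarrow>zs. snd z k)"
  have QW: "Q (\<lambda>_. 0, W)"
    using Qlist[of zs] RS(3) zs0 unfolding W_def by simp
  show "\<exists>ps gs. two_step_decomp m (\<lambda>i. z2 i - z1 i) ps \<and> length gs = length ps \<and>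
           fcM m n c M z2 = fcM m n c M z1 + ereal (\<Sum>k<length ps. gs ! k) \<and>
           (\<forall>I\<subseteq>{..<length ps}.
              fcM m n c M (\<lambda>i. z1 i + (\<Sum>k\<in>I. (ps ! k) i)) \<le> fcM m n c M z1 + ereal (\<Sum>k\<in>I. gs ! k))"
  proof (cases rs)
    case Nil
    have "d i = 0" for i using dM[of i] RS(4) zs0 Nil by simp
    then have z21: "z2 = z1" by (auto simp: d_def)
    show ?thesis
      apply (rule exI[of _ "[]"], rule exI[of _ "[]"])
      using z21 by (simp add: two_step_decomp_def)
  next
    case (Cons r rs0)
    define rr where "rr = (fst r, \<lambda>k. snd r k + W k) # rs0"
    define ps where "ps = map fst rr"
    define ys where "ys = map snd rr"
    define gs where "gs = map (\<lambda>y. real_of_int (\<Sum>j<n. c j * y j)) ys"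
    define N where "N = length rr"
    have lens: "length ps = N" "length ys = N" "length gs = N"
      by (simp_all add: ps_def ys_def gs_def N_def)
    have Qr: "Q r" using RS(1) Cons by simp
    have "Q (fst r, \<lambda>k. snd r k + W k)"
      using clos[OF Qr QW] by simp
    then have Qrr: "\<forall>x\<in>set rr. Q x" using RS(1) Cons by (simp add: rr_def)
    have Qk: "Q (ps ! k, ys ! k)" if "k < N" for k
    proof -
      have eq: "(ps ! k, ys ! k) = rr ! k" using that by (simp add: ps_def ys_def N_def)
      have "rr ! k \<in> set rr" using that by (simp add: N_def)
      then have "Q (rr ! k)" using Qrr by (rule bspec[rotated])
      then show ?thesis by (simp only: eq)
    qed
    have setps: "set ps = fst ` set rs" unfolding ps_def rr_def Cons by simp
    have sumps: "(\<Sum>k<N. (ps ! k) i) = d i" for i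
    proof -
      have "(\<Sum>k<N. (ps ! k) i) = (\<Sum>p\<leftarrow>ps. p i)" using lens by (simp add: sum_list_idx)
      also have "\<dots> = (\<Sum>r\<leftarrow>rs. fst r i)" using Cons by (simp add: ps_def rr_def o_def)
      also have "\<dots> = d i" using RS(4) zs0 dM by simp
      finally show ?thesis .
    qed
    have sumys: "(\<Sum>k<N. (ys ! k) j) = u j" for j
    proof -
      have "(\<Sum>k<N. (ys ! k) j) = (\<Sum>y\<leftarrow>ys. y j)" using lens by (simp add: sum_list_idx)
      also have "\<dots> = (\<Sum>r\<leftarrow>rs. snd r j) + W j" using Cons by (simp add: ys_def rr_def o_def)
      also have "\<dots> = u j" using RS(5) sndL by (simp add: W_def)
      finally show ?thesis .
    qed
    have gsk: "gs ! k = real_of_int (\<Sum>j<n. c j * (ys ! k) j)" if "k < N" for k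
      using that lens by (simp add: gs_def)
    have costsum: "(\<Sum>k\<in>I. gs ! k) = real_of_int (\<Sum>j<n. c j * (\<Sum>k\<in>I. (ys ! k) j))"
      if "I \<subseteq> {..<N}" for I
    proof -
      have "(\<Sum>k\<in>I. gs ! k) = (\<Sum>k\<in>I. real_of_int (\<Sum>j<n. c j * (ys ! k) j))"
        by (rule sum.cong) (use that gsk in auto)
      also have "\<dots> = real_of_int (\<Sum>k\<in>I. \<Sum>j<n. c j * (ys ! k) j)" by simp
      also have "(\<Sum>k\<in>I. \<Sum>j<n. c j * (ys ! k) j) = (\<Sum>j<n. \<Sum>k\<in>I. c j * (ys ! k) j)"
        by (rule sum.swap)
      also have "\<dots> = (\<Sum>j<n. c j * (\<Sum>k\<in>I. (ys ! k) j))"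
        by (simp add: sum_distrib_left)
      finally show ?thesis .
    qed
    show ?thesis
    proof (rule exI[of _ ps], rule exI[of _ gs], intro conjI)
      show "two_step_decomp m (\<lambda>i. z2 i - z1 i) ps"
        unfolding two_step_decomp_def
      proof (intro conjI ballI allI)
        fix p assume p: "p \<in> set ps"
        then show "p \<in> zvec m" "l1norm m p = 2" using RS(1) setps by auto
        show "conf_le p (\<lambda>i. z2 i - z1 i)" unfolding conf_le_def
        proof
          fix i
          have "\<forall>a\<in>set (map (\<lambda>p. p i) ps). \<forall>b\<in>set (map (\<lambda>p. p i) ps). 0 \<le> a * b"
            using RS(2) setps by (auto simp: cons_vec_def)
          moreover have "p i \<in> set (map (\<lambda>p. p i) ps)" using p by auto
          ultimately have cs: "\<bar>p i\<bar> \<le> \<bar>sum_list (map (\<lambda>p. p i) ps)\<bar> \<and> 0 \<le> p i * sum_list (map (\<lambda>p. p i) ps)"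
            by (rule cons_sum)
          have "sum_list (map (\<lambda>p. p i) ps) = z2 i - z1 i"
            using sumps[of i] lens by (simp add: d_def sum_list_idx)
          then show "\<bar>p i\<bar> \<le> \<bar>z2 i - z1 i\<bar> \<and> 0 \<le> p i * (z2 i - z1 i)"
            using cs by simp
        qed
      next
        fix i show "z2 i - z1 i = (\<Sum>k<length ps. (ps ! k) i)"
          using sumps lens by (simp add: d_def)
      qed
    next
      show "length gs = length ps" using lens by simp
    next
      have "(\<Sum>k<length ps. gs ! k) = real_of_int (\<Sum>j<n. c j * u j)"
        using costsum[of "{..<N}"] sumys lens by simp
      moreover have "(\<Sum>j<n. c j * x2 j) = (\<Sum>j<n. c j * x1 j) + (\<Sum>j<n. c j * u j)"
        by (simp add: u_def sum.distrib[symmetric] algebra_simps)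
      ultimately show "fcM m n c M z2 = fcM m n c M z1 + ereal (\<Sum>k<length ps. gs ! k)"
        using fx1 fx2 by simp
    next
      show "\<forall>I\<subseteq>{..<length ps}. fcM m n c M (\<lambda>i. z1 i + (\<Sum>k\<in>I. (ps ! k) i))
              \<le> fcM m n c M z1 + ereal (\<Sum>k\<in>I. gs ! k)"
      proof (intro allI impI)
        fix I assume I: "I \<subseteq> {..<length ps}"
        then have IN: "I \<subseteq> {..<N}" using lens by simp
        have finI: "finite I" using IN finite_subset by blast
        define x' where "x' = (\<lambda>j. x1 j + (\<Sum>k\<in>I. (ys ! k) j))"
        have feas: "x' \<in> feasible m n M (\<lambda>i. z1 i + (\<Sum>k\<in>I. (ps ! k) i))"
          unfolding feasible_def
        proof (intro CollectI conjI allI impI)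
          fix j assume j: "j < n"
          show "0 \<le> x' j"
          proof (cases "0 \<le> u j")
            case True
            then have "\<forall>k\<in>I. 0 \<le> (ys ! k) j" using Qk IN unfolding Q_def by auto
            then have "0 \<le> (\<Sum>k\<in>I. (ys ! k) j)" by (simp add: sum_nonneg)
            then show ?thesis using x1 j by (simp add: x'_def feasible_def)
          next
            case False
            then have np: "\<forall>k\<in>{..<N}. (ys ! k) j \<le> 0" using Qk unfolding Q_def by auto
            have "(\<Sum>k<N. (ys ! k) j) = (\<Sum>k\<in>{..<N} - I. (ys ! k) j) + (\<Sum>k\<in>I. (ys ! k) j)"
              using sum.subset_diff[OF IN] by simp
            moreover have "(\<Sum>k\<in>{..<N} - I. (ys ! k) j) \<le> 0"
              by (rule sum_nonpos) (use np in auto)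
            ultimately have "u j \<le> (\<Sum>k\<in>I. (ys ! k) j)" using sumys by simp
            moreover have "0 \<le> x2 j" using x2 j by (simp add: feasible_def)
            ultimately show ?thesis by (simp add: x'_def u_def)
          qed
        next
          fix j assume j: "n \<le> j"
          have "\<forall>k\<in>I. (ys ! k) j = 0" using Qk IN j unfolding Q_def by auto
          then show "x' j = 0" using x1 j by (simp add: x'_def feasible_def)
        next
          fix i assume i: "i < m"
          have "(\<Sum>j<n. M i j * x' j) = (\<Sum>j<n. M i j * x1 j + (\<Sum>k\<in>I. M i j * (ys ! k) j))"
            by (simp add: x'_def distrib_left sum_distrib_left)
          also have "\<dots> = (\<Sum>j<n. M i j * x1 j) + (\<Sum>j<n. \<Sum>k\<in>I. M i j * (ys ! k) j)"
            by (rule sum.distrib)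
          also have "(\<Sum>j<n. \<Sum>k\<in>I. M i j * (ys ! k) j) = (\<Sum>k\<in>I. \<Sum>j<n. M i j * (ys ! k) j)"
            by (rule sum.swap)
          also have "(\<Sum>k\<in>I. \<Sum>j<n. M i j * (ys ! k) j) = (\<Sum>k\<in>I. (ps ! k) i)"
            by (rule sum.cong) (use Qk IN i in \<open>auto simp: Q_def\<close>)
          finally show "(\<Sum>j<n. M i j * x' j) = z1 i + (\<Sum>k\<in>I. (ps ! k) i)"
            using x1 i by (simp add: feasible_def)
        qed
        have "fcM m n c M (\<lambda>i. z1 i + (\<Sum>k\<in>I. (ps ! k) i)) \<le> ereal (real_of_int (\<Sum>j<n. c j * x' j))"
          by (rule fcM_le[OF G feas])
        also have "(\<Sum>j<n. c j * x' j) = (\<Sum>j<n. c j * x1 j) + (\<Sum>j<n. c j * (\<Sum>k\<in>I. (ys ! k) j))"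
          by (simp add: x'_def distrib_left sum.distrib)
        finally show "fcM m n c M (\<lambda>i. z1 i + (\<Sum>k\<in>I. (ps ! k) i)) \<le> fcM m n c M z1 + ereal (\<Sum>k\<in>I. gs ! k)"
          using fx1 costsum[OF IN] by simp
      qed
    qed
  qed
qed


end
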